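(* There is a function $\varepsilon\colon\mathbb{N}\to\mathbb{R}$ with $\varepsilon(n)\to0$ as $n\to\infty$ such that for every positive integer $n$ and every function $f\colon\{0,1\}^n\to\mathbb{R}$ with a unique global minimum, the expected optimization time of the (1+1)~EA minimizing $f$ is at least $(1-\varepsilon(n))\,\mathrm{e}\, n\ln(n)$.
   Context: The (1+1)~EA minimizing $f\colon\{0,1\}^n\to\mathbb{R}$: choose $x^{(0)}\in\{0,1\}^n$ uniformly at random; for $t=0,1,2,\dots$, sample $y^{(t)}$ by flipping each bit of $x^{(t)}$ independently with probability $1/n$; set $x^{(t+1)}:=y^{(t)}$ if $f(y^{(t)})\le f(x^{(t)})$ and $x^{(t+1)}:=x^{(t)}$ otherwise. The optimization time is the random variable $T_f=\min\{t\in\mathbb{N}: f(x^{(t)})=\min_{z\in\{0,1\}^n}f(z)\}$. *)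

theory Defs
  imports "HOL-Probability.Probability"
begin

text \<open>Bit strings of length n are represented as functions nat => bool that are False
  outside {..<n}; x i is the i-th bit.\<close>

definition bitstrings :: "nat \<Rightarrow> (nat \<Rightarrow> bool) set" where
  "bitstrings n = {x. \<forall>i\<ge>n. \<not> x i}"

definition ea_init :: "nat \<Rightarrow> (nat \<Rightarrow> bool) pmf" where
  "ea_init n = Pi_pmf {..<n} False (\<lambda>_. bernoulli_pmf (1/2))"

definition mutate :: "nat \<Rightarrow> (nat \<Rightarrow> bool) \<Rightarrow> (nat \<Rightarrow> bool) pmf" where
  "mutate n x = map_pmf (\<lambda>fl i. x i \<noteq> fl i)
                   (Pi_pmf {..<n} False (\<lambda>_. bernoulli_pmf (1 / real n)))"

definition ea_step :: "nat \<Rightarrow> ((nat \<Rightarrow> bool) \<Rightarrow> real) \<Rightarrow> (nat \<Rightarrow> bool) \<Rightarrow> (nat \<Rightarrow> bool) pmf" where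
  "ea_step n f x = map_pmf (\<lambda>y. if f y \<le> f x then y else x) (mutate n x)"

fun ea_traj :: "nat \<Rightarrow> ((nat \<Rightarrow> bool) \<Rightarrow> real) \<Rightarrow> nat \<Rightarrow> (nat \<Rightarrow> bool) list pmf" where
  "ea_traj n f 0 = map_pmf (\<lambda>x. [x]) (ea_init n)"
| "ea_traj n f (Suc t) =
     bind_pmf (ea_traj n f t) (\<lambda>xs. map_pmf (\<lambda>y. xs @ [y]) (ea_step n f (last xs)))"

definition opt_value :: "nat \<Rightarrow> ((nat \<Rightarrow> bool) \<Rightarrow> real) \<Rightarrow> real" where
  "opt_value n f = Min (f ` bitstrings n)"

text \<open>Expected optimization time E[T_f] = sum over t of Pr[T_f > t]
  (tail-sum formula, in ennreal so that an infinite expectation is allowed);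
  T_f > t iff none of x0..xt is optimal.\<close>
definition expected_opt_time :: "nat \<Rightarrow> ((nat \<Rightarrow> bool) \<Rightarrow> real) \<Rightarrow> ennreal" where
  "expected_opt_time n f =
     (\<Sum>t. ennreal (measure_pmf.prob (ea_traj n f t)
                      {xs. \<forall>x\<in>set xs. f x \<noteq> opt_value n f}))"

end

theory Submission
  imports Defs "HOL-Real_Asymp.Real_Asymp"
begin

lemma bitstrings_eq: "bitstrings n = (\<lambda>S i. i \<in> S) ` Pow {..<n}"
proof (intro equalityI subsetI)
  fix x assume x: "x \<in> bitstrings n"
  have e: "x = (\<lambda>i. i \<in> {i. x i})" by simp
  have "{i. x i} \<subseteq> {..<n}"
  proof
    fix i assume "i \<in> {i. x i}"
    then have "x i" by simp
    then show "i \<in> {..<n}" using x unfolding bitstrings_def by (cases "i < n") auto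
  qed
  then have "{i. x i} \<in> Pow {..<n}" by simp
  then show "x \<in> (\<lambda>S i. i \<in> S) ` Pow {..<n}" using e by (rule rev_image_eqI)
next
  fix x assume "x \<in> (\<lambda>S i. i \<in> S) ` Pow {..<n}"
  then show "x \<in> bitstrings n" unfolding bitstrings_def by auto
qed

lemma finite_bitstrings: "finite (bitstrings n)"
  unfolding bitstrings_eq by simp

lemma set_pmf_Pi_bits: "set_pmf (Pi_pmf {..<n} False q) \<subseteq> bitstrings n"
  using set_Pi_pmf_subset[of "{..<n}" False q] by (auto simp: bitstrings_def)

lemma finite_set_pmf_Pi_bits: "finite (set_pmf (Pi_pmf {..<(n::nat)} False q))"
  by (rule finite_subset[OF set_pmf_Pi_bits[of n q] finite_bitstrings[of n]])

lemma set_pmf_mutate: "x \<in> bitstrings n \<Longrightarrow> set_pmf (mutate n x) \<subseteq> bitstrings n"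
  unfolding mutate_def using set_pmf_Pi_bits[of n]
  by (auto simp: bitstrings_def)

lemma set_pmf_step: "x \<in> bitstrings n \<Longrightarrow> set_pmf (ea_step n f x) \<subseteq> bitstrings n"
proof
  fix y assume x: "x \<in> bitstrings n" and "y \<in> set_pmf (ea_step n f x)"
  then obtain y' where y': "y' \<in> set_pmf (mutate n x)" and y: "y = (if f y' \<le> f x then y' else x)"
    unfolding ea_step_def by auto
  have "y' \<in> bitstrings n" using y' set_pmf_mutate[OF x] by blast
  then show "y \<in> bitstrings n" using y x by (cases "f y' \<le> f x") auto
qed

lemma set_pmf_init: "set_pmf (ea_init n) \<subseteq> bitstrings n"
  unfolding ea_init_def by (rule set_pmf_Pi_bits)

locale uniq =
  fixes n :: nat and f :: "(nat \<Rightarrow> bool) \<Rightarrow> real" and z :: "nat \<Rightarrow> bool"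
  assumes zB: "z \<in> bitstrings n"
  and zmin: "\<And>y. y \<in> bitstrings n \<Longrightarrow> f z \<le> f y"
  and zuniq: "\<And>y. y \<in> bitstrings n \<Longrightarrow> (\<forall>x\<in>bitstrings n. f y \<le> f x) \<Longrightarrow> y = z"
begin

lemma opt: "opt_value n f = f z"
  unfolding opt_value_def
  by (rule Min_eqI) (use finite_bitstrings zB zmin in auto)

lemma le_z: assumes "y \<in> bitstrings n" "f y \<le> f z" shows "y = z"
proof -
  have "\<forall>x\<in>bitstrings n. f y \<le> f x" using assms(2) zmin order_trans by blast
  thus ?thesis using zuniq assms(1) by blast
qed

lemma step_z: "set_pmf (ea_step n f z) = {z}"
proof -
  have "set_pmf (ea_step n f z) \<subseteq> {z}"
  proof
    fix y assume "y \<in> set_pmf (ea_step n f z)"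
    then obtain y' where y': "y' \<in> set_pmf (mutate n z)" and y: "y = (if f y' \<le> f z then y' else z)"
      unfolding ea_step_def by auto
    have "y' \<in> bitstrings n" using y' set_pmf_mutate[OF zB] by blast
    then have "f y' \<le> f z \<Longrightarrow> y' = z" using le_z by blast
    then show "y \<in> {z}" using y by (cases "f y' \<le> f z") auto
  qed
  moreover have "set_pmf (ea_step n f z) \<noteq> {}" by (rule set_pmf_not_empty)
  ultimately show ?thesis by blast
qed

lemma traj_support:
  "xs \<in> set_pmf (ea_traj n f t) \<Longrightarrow> xs \<noteq> [] \<and> set xs \<subseteq> bitstrings n \<and> (z \<in> set xs \<longrightarrow> last xs = z)"
proof (induction t arbitrary: xs)
  case 0
  then show ?case using set_pmf_init[of n] by auto
next
  case (Suc t)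
  then obtain ys y where ys: "ys \<in> set_pmf (ea_traj n f t)" and y: "y \<in> set_pmf (ea_step n f (last ys))"
    and xs: "xs = ys @ [y]" by auto
  from Suc.IH[OF ys] have IH: "ys \<noteq> []" "set ys \<subseteq> bitstrings n" "z \<in> set ys \<longrightarrow> last ys = z" by auto
  have lb: "last ys \<in> bitstrings n" using IH by auto
  have yb: "y \<in> bitstrings n" using set_pmf_step[OF lb] y by auto
  have "z \<in> set xs \<longrightarrow> y = z"
  proof
    assume "z \<in> set xs"
    then have "z \<in> set ys \<or> y = z" using xs by auto
    then show "y = z"
    proof
      assume "z \<in> set ys"
      then have "last ys = z" using IH by auto
      then show "y = z" using y step_z by auto
    qed
  qed
  then show ?case using xs IH yb by auto
qed

end

lemma pw_core:
  fixes u :: real and A B d d' :: nat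
  assumes u: "0 < u" "u \<le> 1" and dd: "d' + A = d + B"
  shows "max (u^d) (u^d') \<le> u^d * (1 + (if B=0 then (1/u)^A else 0) - (if B=0 then 1 else 0) + A*(1/u)^(A-1) - A)"
    and "max (u^d) (u^d') \<le> u^d * (1/u)^A"
proof -
  define w where "w = 1/u"
  have w1: "w \<ge> 1" using u by (simp add: w_def)
  have uw: "u * w = 1" using u by (simp add: w_def)
  have "u^d' * u^A = u^d * u^B" using dd by (metis power_add)
  hence "u^d' * u^A * w^A = u^d * u^B * w^A" by simp
  hence ud': "u^d' = u^d * u^B * w^A" using uw by (simp add: mult.assoc power_mult_distrib[symmetric])
  have ud: "u^d > 0" using u by simp
  have w_eq: "1/u = w" by (simp add: w_def)
  have uB: "u^B \<le> 1" using u by (simp add: power_le_one)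
  have wA: "w^A \<ge> 1" using w1 by (simp add: one_le_power)
  have wA1: "w^(A-1) \<ge> 1" using w1 by (simp add: one_le_power)
  show "max (u^d) (u^d') \<le> u^d * (1/u)^A"
    unfolding w_def[symmetric] ud'
    using ud uB wA by (auto intro!: mult_left_mono mult_le_one simp: max_def mult.assoc)
  show "max (u^d) (u^d') \<le> u^d * (1 + (if B=0 then (1/u)^A else 0) - (if B=0 then 1 else 0) + A*(1/u)^(A-1) - A)"
  proof (cases "B = 0")
    case True
    have "A * w^(A-1) \<ge> A" using wA1 by (simp add: mult_le_cancel_left1)
    hence "w^A \<le> 1 + w^A - 1 + A*w^(A-1) - A" by simp
    moreover have "1 \<le> 1 + w^A - 1 + A*w^(A-1) - A" using wA \<open>A * w^(A-1) \<ge> A\<close> by simp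
    ultimately show ?thesis using True ud' ud by (auto simp: max_def mult_left_mono w_eq)
  next
    case B0: False
    show ?thesis
    proof (cases "A = 0")
      case True
      then have "u^d' \<le> u^d" using ud' uB ud by (simp add: mult_left_le)
      then show ?thesis using True B0 by (simp add: w_eq)
    next
      case A0: False
      have "u^B \<le> u^1" using u B0 by (intro power_decreasing) auto
      hence "u^B * w^A \<le> u * w^A" using w1 by (intro mult_right_mono) auto
      also have "u * w^A = w^(A-1)"
      proof -
        have "w^A = w * w^(A-1)" using A0 by (cases A) auto
        thus ?thesis using uw by (simp add: mult.assoc[symmetric])
      qed
      finally have a: "u^B * w^A \<le> w^(A-1)" .
      have "u^d' \<le> u^d * w^(A-1)" using a ud' ud by (simp add: mult.assoc mult_left_mono)
      have c1: "w^(A-1) \<le> 1 + A*w^(A-1) - A"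
      proof -
        have "(real A - 1) * (w^(A-1) - 1) \<ge> 0" using A0 wA1 by simp
        thus ?thesis by (simp add: algebra_simps)
      qed
      have "u^d * 1 \<le> u^d * w^(A-1)" using ud wA1 by (intro mult_left_mono) auto
      hence "max (u^d) (u^d') \<le> u^d * w^(A-1)" using \<open>u^d' \<le> u^d * w^(A-1)\<close> by simp
      also have "u^d * w^(A-1) \<le> u^d * (1 + A*w^(A-1) - A)"
        using c1 ud by (intro mult_left_mono) auto
      finally show ?thesis using B0 by (simp add: w_eq)
    qed
  qed
qed

lemma prod_if_pow:
  assumes "finite S"
  shows "(\<Prod>i\<in>S. if P i then (c::real) else e) = c ^ card {i\<in>S. P i} * e ^ card {i\<in>S. \<not> P i}"
proof -
  have "(\<Prod>i\<in>S. if P i then c else e) = prod (\<lambda>_. c) (S \<inter> {x. P x}) * prod (\<lambda>_. e) (S \<inter> - {x. P x})"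
    by (rule prod.If_cases[OF assms])
  also have "S \<inter> {x. P x} = {i\<in>S. P i}" by auto
  also have "S \<inter> - {x. P x} = {i\<in>S. \<not> P i}" by auto
  finally show ?thesis by simp
qed

lemma E_prod:
  fixes g :: "nat \<Rightarrow> bool \<Rightarrow> real"
  assumes p: "0 \<le> p" "p \<le> 1" and g: "\<And>i b. g i b \<ge> 0"
  shows "measure_pmf.expectation (Pi_pmf {..<n} False (\<lambda>_. bernoulli_pmf p)) (\<lambda>fl. \<Prod>i<n. g i (fl i))
       = (\<Prod>i<n. g i True * p + g i False * (1 - p))"
proof -
  have "measure_pmf.expectation (Pi_pmf {..<n} False (\<lambda>_. bernoulli_pmf p)) (\<lambda>fl. \<Prod>i<n. g i (fl i))
     = (\<Prod>i<n. measure_pmf.expectation (bernoulli_pmf p) (g i))"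
    by (rule expectation_prod_Pi_pmf) (auto simp: g intro!: integrable_measure_pmf_finite)
  also have "\<dots> = (\<Prod>i<n. g i True * p + g i False * (1 - p))"
    using p by (simp add: integral_bernoulli_pmf)
  finally show ?thesis .
qed

definition dst :: "nat \<Rightarrow> (nat \<Rightarrow> bool) \<Rightarrow> (nat \<Rightarrow> bool) \<Rightarrow> nat" where
  "dst n z x = card {i\<in>{..<n}. x i \<noteq> z i}"

lemma dst_flip:
  fixes fl x z :: "nat \<Rightarrow> bool" and n :: nat
  defines "W \<equiv> {i\<in>{..<n}. x i \<noteq> z i}"
  shows "dst n z (\<lambda>i. x i \<noteq> fl i) + card {i\<in>W. fl i} = dst n z x + card {i\<in>{..<n} - W. fl i}"
proof -
  have S: "{i\<in>{..<n}. (x i \<noteq> fl i) \<noteq> z i} = (W - {i\<in>W. fl i}) \<union> {i\<in>{..<n} - W. fl i}"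
    unfolding W_def by auto
  have "card {i\<in>{..<n}. (x i \<noteq> fl i) \<noteq> z i} = card (W - {i\<in>W. fl i}) + card {i\<in>{..<n} - W. fl i}"
    unfolding S by (rule card_Un_disjoint) (auto simp: W_def)
  moreover have "card (W - {i\<in>W. fl i}) = card W - card {i\<in>W. fl i}"
    by (rule card_Diff_subset) (auto simp: W_def)
  moreover have "card {i\<in>W. fl i} \<le> card W" by (rule card_mono) (auto simp: W_def)
  ultimately show ?thesis unfolding dst_def W_def by simp
qed

lemma core:
  fixes n :: nat and u :: real and x z :: "nat \<Rightarrow> bool"
  assumes n: "n \<ge> 1" and u: "0 < u" "u \<le> 1"
  defines "M \<equiv> Pi_pmf {..<n} False (\<lambda>_. bernoulli_pmf (1/real n))"
    and "d \<equiv> dst n z x" and "a \<equiv> (1/real n) * (1/u - 1)"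
  shows "measure_pmf.expectation M (\<lambda>fl. max (u^d) (u^(dst n z (\<lambda>i. x i \<noteq> fl i))))
          \<le> u^d * (1 + (1 - 1/real n)^(n-d) * ((1+a)^d - 1) + real d * (1/real n) * ((1+a)^(d-1) - 1))"
    and "measure_pmf.expectation M (\<lambda>fl. max (u^d) (u^(dst n z (\<lambda>i. x i \<noteq> fl i)))) \<le> u^d * (1+a)^d"
proof -
  define p where "p = 1 / real n"
  define w where "w = 1 / u"
  define W where "W = {i\<in>{..<n}. x i \<noteq> z i}"
  have p01: "0 \<le> p" "p \<le> 1" using n by (auto simp: p_def)
  have finW: "finite W" by (simp add: W_def)
  have Wsub: "W \<subseteq> {..<n}" by (auto simp: W_def)
  have cardW: "card W = d" by (simp add: d_def dst_def W_def)
  have intM: "\<And>g::(nat\<Rightarrow>bool)\<Rightarrow>real. integrable (measure_pmf M) g"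
    unfolding M_def by (rule integrable_measure_pmf_finite, rule finite_set_pmf_Pi_bits)
  have aw: "w * p + (1 - p) = 1 + a" by (simp add: a_def p_def w_def algebra_simps)
  have w0: "w \<ge> 0" using u by (simp add: w_def)
  define A where "A fl = card {i\<in>W. fl i}" for fl :: "nat \<Rightarrow> bool"
  define B where "B fl = card {i\<in>{..<n} - W. fl i}" for fl :: "nat \<Rightarrow> bool"
  define h1 where "h1 i b = (if i \<in> W \<and> b then w else 1)" for i b
  define h0 where "h0 i b = (if i \<notin> W \<and> b then 0 else (1::real))" for i b
  define g3 where "g3 k i b = (if i = k then (if b then 1 else 0) else h1 i b)" for k i b
  have V1: "(\<Prod>i<n. h1 i (fl i)) = w ^ A fl" for fl
  proof -
    have "(\<Prod>i<n. h1 i (fl i)) = w ^ card {i\<in>{..<n}. i \<in> W \<and> fl i} * 1 ^ card {i\<in>{..<n}. \<not> (i \<in> W \<and> fl i)}"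
      unfolding h1_def by (rule prod_if_pow) simp
    also have "{i\<in>{..<n}. i \<in> W \<and> fl i} = {i\<in>W. fl i}" using Wsub by auto
    finally show ?thesis by (simp add: A_def)
  qed
  have V0: "(\<Prod>i<n. h0 i (fl i)) = (if B fl = 0 then 1 else 0)" for fl
  proof -
    have "(\<Prod>i<n. h0 i (fl i)) = 0 ^ card {i\<in>{..<n}. i \<notin> W \<and> fl i} * 1 ^ card {i\<in>{..<n}. \<not> (i \<notin> W \<and> fl i)}"
      unfolding h0_def by (rule prod_if_pow) simp
    also have "{i\<in>{..<n}. i \<notin> W \<and> fl i} = {i\<in>{..<n} - W. fl i}" by auto
    finally have e: "(\<Prod>i<n. h0 i (fl i)) = 0 ^ B fl" unfolding B_def by simp
    show ?thesis unfolding e by (simp add: power_0_left)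
  qed
  have V3: "(\<Prod>i<n. g3 k i (fl i)) = (if fl k then w ^ (A fl - 1) else 0)" if k: "k \<in> W" for k fl
  proof -
    have kn: "k \<in> {..<n}" using k Wsub by auto
    have "(\<Prod>i<n. g3 k i (fl i)) = g3 k k (fl k) * (\<Prod>i\<in>{..<n} - {k}. g3 k i (fl i))"
      by (rule prod.remove[OF _ kn]) simp
    also have "(\<Prod>i\<in>{..<n} - {k}. g3 k i (fl i)) = (\<Prod>i\<in>{..<n} - {k}. h1 i (fl i))"
      by (rule prod.cong) (auto simp: g3_def)
    also have "\<dots> = w ^ card {i\<in>{..<n} - {k}. i \<in> W \<and> fl i} * 1 ^ card {i\<in>{..<n} - {k}. \<not> (i \<in> W \<and> fl i)}"
      unfolding h1_def by (rule prod_if_pow) simp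
    also have "{i\<in>{..<n} - {k}. i \<in> W \<and> fl i} = {i\<in>W. fl i} - {k}" using Wsub by auto
    finally show ?thesis
      using k finW by (auto simp: g3_def A_def)
  qed
  have VS: "(\<Sum>k\<in>W. \<Prod>i<n. g3 k i (fl i)) = real (A fl) * w ^ (A fl - 1)" for fl
  proof -
    have "(\<Sum>k\<in>W. \<Prod>i<n. g3 k i (fl i)) = (\<Sum>k\<in>W. if fl k then w ^ (A fl - 1) else 0)"
      by (rule sum.cong) (auto simp: V3)
    also have "\<dots> = (\<Sum>k\<in>{k\<in>W. fl k}. w ^ (A fl - 1))"
      by (rule sum.inter_filter[symmetric]) (rule finW)
    finally show ?thesis by (simp add: A_def)
  qed
  have VI: "(\<Sum>k\<in>W. if fl k then 1 else 0) = real (A fl)" for fl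
  proof -
    have "(\<Sum>k\<in>W. if fl k then 1 else (0::real)) = (\<Sum>k\<in>{k\<in>W. fl k}. 1)"
      by (rule sum.inter_filter[symmetric]) (rule finW)
    thus ?thesis by (simp add: A_def)
  qed
  define R where "R fl = u^d * (1 + (\<Prod>i<n. h1 i (fl i) * h0 i (fl i)) - (\<Prod>i<n. h0 i (fl i))
      + (\<Sum>k\<in>W. \<Prod>i<n. g3 k i (fl i)) - (\<Sum>k\<in>W. if fl k then 1 else 0))" for fl
  have pw: "max (u^d) (u^(dst n z (\<lambda>i. x i \<noteq> fl i))) \<le> R fl" for fl
  proof -
    have dd: "dst n z (\<lambda>i. x i \<noteq> fl i) + A fl = d + B fl"
      using dst_flip[where x=x and z=z and n=n and fl=fl] by (simp add: A_def B_def W_def d_def)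
    have "R fl = u^d * (1 + (if B fl = 0 then (1/u)^(A fl) else 0) - (if B fl = 0 then 1 else 0)
               + A fl * (1/u)^(A fl - 1) - A fl)"
      unfolding R_def prod.distrib V1 V0 VS VI by (simp add: w_def)
    thus ?thesis using pw_core(1)[OF u dd] by simp
  qed
  have pw2: "max (u^d) (u^(dst n z (\<lambda>i. x i \<noteq> fl i))) \<le> u^d * (\<Prod>i<n. h1 i (fl i))" for fl
  proof -
    have dd: "dst n z (\<lambda>i. x i \<noteq> fl i) + A fl = d + B fl"
      using dst_flip[where x=x and z=z and n=n and fl=fl] by (simp add: A_def B_def W_def d_def)
    show ?thesis using pw_core(2)[OF u dd] by (simp add: V1 w_def)
  qed
  have cW: "card {i\<in>{..<n}. i \<in> W} = d" using cardW Wsub by (metis (no_types, lifting) Collect_cong Collect_mem_eq inf.absorb_iff2 Int_def)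
  have cnW: "card {i\<in>{..<n}. i \<notin> W} = n - d"
  proof -
    have "{i\<in>{..<n}. i \<notin> W} = {..<n} - W" by auto
    thus ?thesis using card_Diff_subset[OF finW Wsub] cardW by simp
  qed
  have E1: "measure_pmf.expectation M (\<lambda>fl. \<Prod>i<n. h1 i (fl i) * h0 i (fl i)) = (1+a)^d * (1-p)^(n-d)"
  proof -
    have "measure_pmf.expectation M (\<lambda>fl. \<Prod>i<n. h1 i (fl i) * h0 i (fl i))
        = (\<Prod>i<n. h1 i True * h0 i True * p + h1 i False * h0 i False * (1 - p))"
      unfolding M_def p_def using p01 w0 by (intro E_prod) (auto simp: p_def h1_def h0_def)
    also have "\<dots> = (\<Prod>i<n. if i \<in> W then 1 + a else 1 - p)"
      by (rule prod.cong) (auto simp: h1_def h0_def aw[symmetric])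
    also have "\<dots> = (1+a)^d * (1-p)^(n-d)" using cW cnW by (simp add: prod_if_pow)
    finally show ?thesis .
  qed
  have E0: "measure_pmf.expectation M (\<lambda>fl. \<Prod>i<n. h0 i (fl i)) = (1-p)^(n-d)"
  proof -
    have "measure_pmf.expectation M (\<lambda>fl. \<Prod>i<n. h0 i (fl i))
        = (\<Prod>i<n. h0 i True * p + h0 i False * (1 - p))"
      unfolding M_def p_def using p01 by (intro E_prod) (auto simp: p_def h0_def)
    also have "\<dots> = (\<Prod>i<n. if i \<in> W then 1 else 1 - p)"
      by (rule prod.cong) (auto simp: h0_def)
    also have "\<dots> = (1-p)^(n-d)" using cW cnW by (simp add: prod_if_pow)
    finally show ?thesis .
  qed
  have EH: "measure_pmf.expectation M (\<lambda>fl. \<Prod>i<n. h1 i (fl i)) = (1+a)^d"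
  proof -
    have "measure_pmf.expectation M (\<lambda>fl. \<Prod>i<n. h1 i (fl i))
        = (\<Prod>i<n. h1 i True * p + h1 i False * (1 - p))"
      unfolding M_def p_def using p01 w0 by (intro E_prod) (auto simp: p_def h1_def)
    also have "\<dots> = (\<Prod>i<n. if i \<in> W then 1 + a else 1)"
      by (rule prod.cong) (auto simp: h1_def aw[symmetric])
    also have "\<dots> = (1+a)^d" using cW cnW by (simp add: prod_if_pow)
    finally show ?thesis .
  qed
  have E3: "measure_pmf.expectation M (\<lambda>fl. \<Prod>i<n. g3 k i (fl i)) = p * (1+a)^(d-1)" if k: "k \<in> W" for k
  proof -
    have kn: "k \<in> {..<n}" using k Wsub by auto
    have "measure_pmf.expectation M (\<lambda>fl. \<Prod>i<n. g3 k i (fl i))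
        = (\<Prod>i<n. g3 k i True * p + g3 k i False * (1 - p))"
      unfolding M_def p_def using p01 w0 by (intro E_prod) (auto simp: p_def h1_def g3_def)
    also have "\<dots> = (g3 k k True * p + g3 k k False * (1 - p)) * (\<Prod>i\<in>{..<n}-{k}. g3 k i True * p + g3 k i False * (1 - p))"
      by (rule prod.remove[OF _ kn]) simp
    also have "(\<Prod>i\<in>{..<n}-{k}. g3 k i True * p + g3 k i False * (1 - p)) = (\<Prod>i\<in>{..<n}-{k}. if i \<in> W then 1 + a else 1)"
      by (rule prod.cong) (auto simp: g3_def h1_def aw[symmetric])
    also have "\<dots> = (1+a) ^ card {i\<in>{..<n}-{k}. i \<in> W} * 1 ^ card {i\<in>{..<n}-{k}. i \<notin> W}"
      by (rule prod_if_pow) simp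
    also have "{i\<in>{..<n}-{k}. i \<in> W} = W - {k}" using Wsub by auto
    finally show ?thesis using k finW cardW by (simp add: g3_def)
  qed
  have EI: "measure_pmf.expectation M (\<lambda>fl. if fl k then 1 else 0) = p" if k: "k \<in> W" for k
  proof -
    have kn: "k < n" using k Wsub by auto
    have "measure_pmf.expectation M (\<lambda>fl. if fl k then 1 else 0) = measure_pmf.expectation (map_pmf (\<lambda>fl. fl k) M) (\<lambda>b. if b then 1 else (0::real))"
      by (simp only: integral_map_pmf)
    also have "map_pmf (\<lambda>fl. fl k) M = bernoulli_pmf p"
      unfolding M_def p_def using kn by (simp add: Pi_pmf_component)
    finally show ?thesis using p01 by (simp add: integral_bernoulli_pmf)
  qed
  have ER: "measure_pmf.expectation M R = u^d * (1 + (1+a)^d * (1-p)^(n-d) - (1-p)^(n-d) + real d * (p * (1+a)^(d-1)) - real d * p)"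
    unfolding R_def
    by (simp add: intM E1 E0 E3 EI cardW)
  show "measure_pmf.expectation M (\<lambda>fl. max (u^d) (u^(dst n z (\<lambda>i. x i \<noteq> fl i))))
          \<le> u^d * (1 + (1 - 1/real n)^(n-d) * ((1+a)^d - 1) + real d * (1/real n) * ((1+a)^(d-1) - 1))"
  proof -
    have "measure_pmf.expectation M (\<lambda>fl. max (u^d) (u^(dst n z (\<lambda>i. x i \<noteq> fl i)))) \<le> measure_pmf.expectation M R"
      by (intro integral_mono intM pw)
    also have "\<dots> = u^d * (1 + (1 - 1/real n)^(n-d) * ((1+a)^d - 1) + real d * (1/real n) * ((1+a)^(d-1) - 1))"
      unfolding ER by (simp add: p_def algebra_simps)
    finally show ?thesis .
  qed
  show "measure_pmf.expectation M (\<lambda>fl. max (u^d) (u^(dst n z (\<lambda>i. x i \<noteq> fl i)))) \<le> u^d * (1+a)^d"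
  proof -
    have "measure_pmf.expectation M (\<lambda>fl. max (u^d) (u^(dst n z (\<lambda>i. x i \<noteq> fl i)))) \<le> measure_pmf.expectation M (\<lambda>fl. u^d * (\<Prod>i<n. h1 i (fl i)))"
      by (intro integral_mono intM pw2)
    also have "\<dots> = u^d * (1+a)^d" by (simp add: EH)
    finally show ?thesis .
  qed
qed

lemma exp_minus_one_le: assumes "x \<ge> (0::real)" shows "exp x - 1 \<le> x * exp x"
proof -
  have "1 + -x \<le> exp (-x)" by (rule exp_ge_add_one_self)
  hence "(1 - x) * exp x \<le> exp (-x) * exp x" by (intro mult_right_mono) auto
  also have "exp (-x) * exp x = 1" by (simp flip: exp_add)
  finally show ?thesis by (simp add: algebra_simps)
qed

lemma pow_bound: assumes "a \<ge> (0::real)" shows "(1+a)^d - 1 \<le> real d * a * exp (real d * a)"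
proof -
  have "(1+a)^d \<le> (exp a)^d"
    using assms by (intro power_mono) (use exp_ge_add_one_self[of a] in auto)
  also have "(exp a)^d = exp (real d * a)" by (simp add: exp_of_nat_mult)
  finally have "(1+a)^d - 1 \<le> exp (real d * a) - 1" by simp
  also have "\<dots> \<le> real d * a * exp (real d * a)" using assms by (intro exp_minus_one_le) simp
  finally show ?thesis .
qed

lemma q_bound: assumes "n \<ge> 1" "d \<le> n" shows "(1 - 1/real n)^(n-d) \<le> exp (real d / n - 1)"
proof -
  have "(1 - 1/real n)^(n-d) \<le> (exp (-(1/real n)))^(n-d)"
    using assms by (intro power_mono) (auto simp: exp_ge_add_one_self[of "-(1/real n)", simplified])
  also have "\<dots> = exp (real (n-d) * (-(1/real n)))" by (subst exp_of_nat_mult[symmetric]) simp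
  also have "real (n-d) * (-(1/real n)) = real d / n - 1" using assms by (simp add: of_nat_diff field_simps)
  finally show ?thesis .
qed

lemma one_minus_exp_ge: assumes "y \<ge> (0::real)" shows "y / (1 + y) \<le> 1 - exp (-y)"
proof -
  have "1 + y \<le> exp y" by (rule exp_ge_add_one_self)
  hence "exp (-y) \<le> 1 / (1 + y)" using assms by (simp add: exp_minus field_simps)
  moreover have "1 / (1 + y) = 1 - y / (1 + y)" using assms by (simp add: field_simps)
  ultimately show ?thesis by simp
qed

lemma good_region:
  fixes n d :: nat and c \<zeta> v :: real
  assumes n2: "n \<ge> 2" and c: "1/3 \<le> c" "c \<le> 1" and z: "0 < \<zeta>"
    and X: "exp (4*\<zeta>) * (exp (\<zeta> - 1) + \<zeta>) \<le> c - 1/n"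
    and v: "0 < v" "v \<le> exp (-c)"
    and dz: "real d \<le> \<zeta> * n" and dn1: "d \<le> n"
  shows "(1-v)^d * (1 + (1 - 1/real n)^(n-d) * ((1 + (1/real n) * (1/(1-v) - 1))^d - 1)
           + real d * (1/real n) * ((1 + (1/real n) * (1/(1-v) - 1))^(d-1) - 1))
         \<le> (1 - v * exp (-c/n))^d"
proof -
  define u' where "u' = 1 - v"
  define u where "u = 1 - v * exp (-c/n)"
  define a where "a = (1/real n) * (1/u' - 1)"
  define X where "X = exp (4*\<zeta>) * (exp (\<zeta> - 1) + \<zeta>)"
  have n0: "real n > 0" using n2 by simp
  have ec: "exp (-c) \<le> 1 / (1 + c)"
  proof -
    have "1 + c \<le> exp c" by (rule exp_ge_add_one_self)
    thus ?thesis using c by (simp add: exp_minus field_simps)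
  qed
  have u'14: "u' \<ge> 1/4"
  proof -
    have "1/(1+c) \<le> 3/4" using c by (simp add: field_simps)
    thus ?thesis using v ec by (simp add: u'_def)
  qed
  have u'1: "u' \<le> 1" using v by (simp add: u'_def)
  have v1: "v \<le> 1" using u'14 by (simp add: u'_def)
  have aeq: "real d * a = (real d / n) * (v / u')" using u'14 by (simp add: a_def u'_def field_simps)
  have a0: "a \<ge> 0" using u'14 u'1 by (simp add: a_def field_simps)
  have dn: "real d / n \<le> \<zeta>" using dz n0 by (simp add: field_simps)
  have vu: "v / u' \<le> 4" using u'14 v1 v by (simp add: field_simps)
  have da: "real d * a \<le> 4 * \<zeta>"
  proof -
    have "(real d / n) * (v / u') \<le> \<zeta> * 4"
      using dn vu v u'14 z by (intro mult_mono) auto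
    thus ?thesis using aeq by simp
  qed
  have da0: "real d * a \<ge> 0" using a0 by simp
  have q: "(1 - 1/real n)^(n-d) \<le> exp (\<zeta> - 1)"
  proof -
    have "(1 - 1/real n)^(n-d) \<le> exp (real d / n - 1)" using q_bound[of n d] dn1 n2 by simp
    also have "\<dots> \<le> exp (\<zeta> - 1)" using dn by simp
    finally show ?thesis .
  qed
  have P1: "(1+a)^d - 1 \<le> real d * a * exp (4*\<zeta>)"
  proof -
    have "(1+a)^d - 1 \<le> real d * a * exp (real d * a)" by (rule pow_bound[OF a0])
    also have "\<dots> \<le> real d * a * exp (4*\<zeta>)" using da da0 by (intro mult_left_mono) auto
    finally show ?thesis .
  qed
  have P2: "(1+a)^(d-1) - 1 \<le> real d * a * exp (4*\<zeta>)"
  proof -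
    have "(1+a)^(d-1) - 1 \<le> real (d-1) * a * exp (real (d-1) * a)" by (rule pow_bound[OF a0])
    also have "\<dots> \<le> real d * a * exp (real d * a)"
      using a0 by (intro mult_mono) (auto intro!: mult_right_mono)
    also have "\<dots> \<le> real d * a * exp (4*\<zeta>)" using da da0 by (intro mult_left_mono) auto
    finally show ?thesis .
  qed
  have ge1: "(1+a)^d - 1 \<ge> 0" "(1+a)^(d-1) - 1 \<ge> 0" using a0 by (auto simp: one_le_power)
  have T1: "(1 - 1/real n)^(n-d) * ((1+a)^d - 1) \<le> exp (\<zeta> - 1) * (real d * a * exp (4*\<zeta>))"
    using q P1 ge1 by (intro mult_mono) auto
  have T2: "real d * (1/real n) * ((1+a)^(d-1) - 1) \<le> \<zeta> * (real d * a * exp (4*\<zeta>))"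
    using dn P2 ge1 z by (intro mult_mono) auto
  have S: "(1 - 1/real n)^(n-d) * ((1+a)^d - 1) + real d * (1/real n) * ((1+a)^(d-1) - 1)
           \<le> real d * a * X"
    using T1 T2 by (simp add: X_def algebra_simps)
  also have "\<dots> \<le> real d * a * (c - 1/n)" using X da0 by (intro mult_left_mono) (auto simp: X_def)
  also have "\<dots> \<le> real d * ((u - u') / u')"
  proof -
    have e1: "c/n / (1 + c/n) \<le> 1 - exp (-(c/n))" using c n0 by (intro one_minus_exp_ge) auto
    have e2: "(c - 1/n) / n \<le> c/n / (1 + c/n)"
    proof -
      have "c/n / (1 + c/n) = c / (n + c)" using n0 c by (simp add: field_simps)
      moreover have "(c - 1/n) / n \<le> c / (n + c)"
      proof -
        have "(c - 1/n) * (n + c) \<le> c * n"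
        proof -
          have "(c - 1/n) * (n + c) = c*n + c*c - 1 - c/n" using n0 by (simp add: field_simps)
          moreover have "c * c \<le> 1" using c by (simp add: mult_le_one)
          moreover have "c/n \<ge> 0" using c n0 by simp
          ultimately show ?thesis by linarith
        qed
        thus ?thesis using n0 c by (simp add: field_simps)
      qed
      ultimately show ?thesis by linarith
    qed
    have "a * (c - 1/n) = (v / u') * ((c - 1/n) / n)" using u'14 by (simp add: a_def u'_def field_simps)
    also have "\<dots> \<le> (v / u') * (1 - exp (-(c/n)))"
      using e1 e2 v u'14 by (intro mult_left_mono) auto
    also have "\<dots> = (u - u') / u'" by (simp add: u_def u'_def field_simps)
    finally have h: "a * (c - 1/n) \<le> (u - u') / u'" .
    have "real d * a * (c - 1/n) = real d * (a * (c - 1/n))" by (simp only: mult.assoc)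
    also have "\<dots> \<le> real d * ((u - u') / u')" using h by (rule mult_left_mono) simp
    finally show ?thesis .
  qed
  finally have S2: "1 + (1 - 1/real n)^(n-d) * ((1+a)^d - 1) + real d * (1/real n) * ((1+a)^(d-1) - 1)
       \<le> 1 + real d * ((u - u') / u')" by simp
  have xge: "(u - u') / u' \<ge> -1"
  proof -
    have "exp (-c/n) \<le> 1" using c n0 by simp
    hence "u - u' \<ge> 0" using v by (simp add: u_def u'_def mult_le_cancel_left1)
    hence "0 \<le> (u - u') / u'" using u'14 by simp
    thus ?thesis by linarith
  qed
  have B: "1 + real d * ((u - u') / u') \<le> (1 + (u - u') / u')^d"
    by (rule Bernoulli_inequality[OF xge])
  have "u'^d * (1 + (1 - 1/real n)^(n-d) * ((1+a)^d - 1) + real d * (1/real n) * ((1+a)^(d-1) - 1))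
        \<le> u'^d * (1 + (u - u') / u')^d"
    using S2 B u'14 by (intro mult_left_mono) auto
  also have "\<dots> = (u' * (1 + (u - u') / u'))^d" by (simp only: power_mult_distrib)
  also have "u' * (1 + (u - u') / u') = u" using u'14 by (simp add: field_simps)
  finally show ?thesis by (simp add: u_def u'_def a_def)
qed

lemma bad_region:
  fixes n d :: nat and \<zeta> v vmin :: real
  assumes n2: "n \<ge> 2" and z: "0 < \<zeta>" and v: "0 < v" "v < 1" and vm: "0 \<le> vmin" "vmin \<le> v"
    and dz: "real d > \<zeta> * n"
  shows "(1-v)^d * (1 + (1/real n) * (1/(1-v) - 1))^d \<le> exp (- (vmin * \<zeta> * n / 2))"
proof -
  have n0: "real n \<ge> 2" using n2 by simp
  have e: "(1-v) * (1 + (1/real n) * (1/(1-v) - 1)) = 1 - v * (1 - 1/n)"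
  proof -
    have gen: "\<And>w r. (1-v) * (1 + r * (w - 1)) = (1-v) + r * ((1-v) * w - (1-v))"
      by (simp add: algebra_simps)
    have "(1-v) * (1 + (1/real n) * (1/(1-v) - 1)) = (1-v) + (1/real n) * ((1-v) * (1/(1-v)) - (1-v))"
      by (rule gen)
    also have "(1-v) * (1/(1-v)) = 1" using v by simp
    finally show ?thesis by (simp add: algebra_simps)
  qed
  have h: "1/real n \<le> 1/2" using n0 by simp
  have "(1-v)^d * (1 + (1/real n) * (1/(1-v) - 1))^d = (1 - v * (1 - 1/n))^d"
    by (simp only: power_mult_distrib[symmetric] e)
  also have "\<dots> \<le> (exp (-(v * (1 - 1/n))))^d"
  proof (intro power_mono)
    show "1 - v * (1 - 1/n) \<le> exp (-(v * (1 - 1/n)))" using exp_ge_add_one_self[of "-(v * (1 - 1/n))"] by simp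
    have "v * (1 - 1/n) \<le> v * 1" using v h by (intro mult_left_mono) auto
    then show "0 \<le> 1 - v * (1 - 1/n)" using v by linarith
  qed
  also have "\<dots> = exp (- (real d * (v * (1 - 1/n))))" by (simp add: exp_of_nat_mult[symmetric])
  also have "\<dots> \<le> exp (- (vmin * \<zeta> * n / 2))"
  proof -
    have "vmin * \<zeta> * n / 2 = (\<zeta> * n) * (vmin * (1/2))" by simp
    also have "\<dots> \<le> real d * (v * (1 - 1/n))"
      using dz vm h z v by (intro mult_mono) auto
    finally show ?thesis by simp
  qed
  finally show ?thesis .
qed

lemma dst_le: "dst n z x \<le> n"
proof -
  have "dst n z x \<le> card {..<n}" unfolding dst_def by (rule card_mono) auto
  thus ?thesis by simp
qed

lemma step_expect:
  fixes u :: real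
  assumes n: "n \<ge> 1" and u: "0 < u" "u \<le> 1"
  shows "measure_pmf.expectation (ea_step n f x) (\<lambda>y. u ^ dst n z y)
     \<le> measure_pmf.expectation (Pi_pmf {..<n} False (\<lambda>_. bernoulli_pmf (1/real n)))
          (\<lambda>fl. max (u ^ dst n z x) (u ^ dst n z (\<lambda>i. x i \<noteq> fl i)))"
proof -
  define M where "M = Pi_pmf {..<n} False (\<lambda>_. bernoulli_pmf (1/real n))"
  have intM: "\<And>g::(nat\<Rightarrow>bool)\<Rightarrow>real. integrable (measure_pmf M) g"
    unfolding M_def by (rule integrable_measure_pmf_finite, rule finite_set_pmf_Pi_bits)
  have "measure_pmf.expectation (ea_step n f x) (\<lambda>y. u ^ dst n z y)
      = measure_pmf.expectation M (\<lambda>fl. u ^ dst n z (if f (\<lambda>i. x i \<noteq> fl i) \<le> f x then (\<lambda>i. x i \<noteq> fl i) else x))"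
    unfolding ea_step_def mutate_def M_def by (simp only: integral_map_pmf)
  also have "\<dots> \<le> measure_pmf.expectation M (\<lambda>fl. max (u ^ dst n z x) (u ^ dst n z (\<lambda>i. x i \<noteq> fl i)))"
    by (intro integral_mono intM) auto
  finally show ?thesis unfolding M_def .
qed

lemma onestep:
  fixes n :: nat and c \<zeta> v vmin :: real
  assumes n2: "n \<ge> 2" and c: "1/3 \<le> c" "c \<le> 1" and z: "0 < \<zeta>"
    and X: "exp (4*\<zeta>) * (exp (\<zeta> - 1) + \<zeta>) \<le> c - 1/n"
    and v: "0 < v" "v \<le> exp (-c)" and vm: "0 \<le> vmin" "vmin \<le> v"
  shows "measure_pmf.expectation (ea_step n f x) (\<lambda>y. (1-v) ^ dst n z y)
     \<le> (1 - v * exp (-c/n)) ^ dst n z x + exp (- (vmin * \<zeta> * n / 2))"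
proof -
  define d where "d = dst n z x"
  have dn: "d \<le> n" unfolding d_def by (rule dst_le)
  have ec1: "exp (-c) < 1" using c by simp
  have v1: "v < 1" using v ec1 by linarith
  have u: "0 < 1 - v" "1 - v \<le> 1" using v v1 by auto
  have n1: "n \<ge> 1" using n2 by simp
  have E: "measure_pmf.expectation (ea_step n f x) (\<lambda>y. (1-v) ^ dst n z y)
     \<le> measure_pmf.expectation (Pi_pmf {..<n} False (\<lambda>_. bernoulli_pmf (1/real n)))
          (\<lambda>fl. max ((1-v) ^ d) ((1-v) ^ dst n z (\<lambda>i. x i \<noteq> fl i)))"
    unfolding d_def by (rule step_expect[OF n1 u])
  have eps0: "exp (- (vmin * \<zeta> * n / 2)) \<ge> 0" by simp
  have ue: "0 \<le> 1 - v * exp (-c/n)"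
  proof -
    have "exp (-c/n) \<le> 1" using c n2 by simp
    hence "v * exp (-c/n) \<le> v * 1" using v by (intro mult_left_mono) auto
    thus ?thesis using v1 by linarith
  qed
  show ?thesis
  proof (cases "real d \<le> \<zeta> * n")
    case True
    have "measure_pmf.expectation (ea_step n f x) (\<lambda>y. (1-v) ^ dst n z y)
       \<le> (1-v)^d * (1 + (1 - 1/real n)^(n-d) * ((1 + (1/real n) * (1/(1-v) - 1))^d - 1)
           + real d * (1/real n) * ((1 + (1/real n) * (1/(1-v) - 1))^(d-1) - 1))"
      using E core(1)[OF n1 u, of z x] unfolding d_def by linarith
    also have "\<dots> \<le> (1 - v * exp (-c/n))^d"
      by (rule good_region[OF n2 c z X v True dn])
    finally show ?thesis using eps0 unfolding d_def by linarith
  next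
    case False
    have "measure_pmf.expectation (ea_step n f x) (\<lambda>y. (1-v) ^ dst n z y)
       \<le> (1-v)^d * (1 + (1/real n) * (1/(1-v) - 1))^d"
      using E core(2)[OF n1 u, of z x] unfolding d_def by linarith
    also have "\<dots> \<le> exp (- (vmin * \<zeta> * n / 2))"
      using False by (intro bad_region[OF n2 z v(1) v1 vm]) simp
    finally show ?thesis using ue unfolding d_def by (smt (verit) zero_le_power)
  qed
qed

lemma init_expect:
  fixes u :: real assumes u: "0 \<le> u"
  shows "measure_pmf.expectation (ea_init n) (\<lambda>x. u ^ dst n z x) = ((u + 1)/2)^n"
proof -
  have pw: "u ^ dst n z x = (\<Prod>i<n. (\<lambda>i b. if b \<noteq> z i then u else 1) i (x i))" for x
  proof -
    have "(\<Prod>i<n. (\<lambda>i b. if b \<noteq> z i then u else 1) i (x i))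
        = u ^ card {i\<in>{..<n}. x i \<noteq> z i} * 1 ^ card {i\<in>{..<n}. \<not> x i \<noteq> z i}"
      by (rule prod_if_pow) simp
    thus ?thesis by (simp add: dst_def)
  qed
  have "measure_pmf.expectation (ea_init n) (\<lambda>x. u ^ dst n z x)
     = measure_pmf.expectation (Pi_pmf {..<n} False (\<lambda>_. bernoulli_pmf (1/2)))
         (\<lambda>x. \<Prod>i<n. (\<lambda>i b. if b \<noteq> z i then u else 1) i (x i))"
    unfolding ea_init_def pw ..
  also have "\<dots> = (\<Prod>i<n. (\<lambda>i b. if b \<noteq> z i then u else 1) i True * (1/2)
                         + (\<lambda>i b. if b \<noteq> z i then u else 1) i False * (1 - 1/2))"
    using u by (intro E_prod) auto
  also have "\<dots> = (\<Prod>i<n. (u + 1)/2)" by (intro prod.cong) auto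
  finally show ?thesis by simp
qed

lemma nn_step:
  assumes "x \<in> bitstrings n" "\<And>y. g y \<ge> 0"
  shows "(\<integral>\<^sup>+y. ennreal (g y) \<partial>ea_step n f x) = ennreal (measure_pmf.expectation (ea_step n f x) g)"
proof -
  have fin: "finite (set_pmf (ea_step n f x))"
    using set_pmf_step[OF assms(1)] finite_bitstrings finite_subset by metis
  show ?thesis
    by (rule nn_integral_eq_integral) (use fin assms(2) in \<open>auto intro: integrable_measure_pmf_finite\<close>)
qed

context uniq
begin

lemma traj_bound:
  fixes c \<zeta> :: real and h t0 :: nat
  assumes n2: "n \<ge> 2" and c: "1/3 \<le> c" "c \<le> 1" and z: "0 < \<zeta>"
    and X: "exp (4*\<zeta>) * (exp (\<zeta> - 1) + \<zeta>) \<le> c - 1/real n"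
    and ht: "h \<le> t0"
  defines "V \<equiv> \<lambda>s::nat. exp (- (c * (real s + n) / n))"
  shows "\<tau> \<le> h \<Longrightarrow> (\<integral>\<^sup>+xs. ennreal ((1 - V (h-\<tau>)) ^ dst n z (last xs)) \<partial>measure_pmf (ea_traj n f \<tau>))
          \<le> ennreal (((2 - V h)/2)^n + real \<tau> * exp (- (V t0 * \<zeta> * n / 2)))"
proof (induction \<tau>)
  case 0
  have n0: "real n > 0" using n2 by simp
  have Vle: "V h \<le> 1" using c n0 by (simp add: V_def)
  have "(\<integral>\<^sup>+xs. ennreal ((1 - V (h-0)) ^ dst n z (last xs)) \<partial>measure_pmf (ea_traj n f 0))
      = (\<integral>\<^sup>+x. ennreal ((1 - V h) ^ dst n z x) \<partial>measure_pmf (ea_init n))"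
    by (simp add: nn_integral_map_pmf)
  also have "\<dots> = ennreal (measure_pmf.expectation (ea_init n) (\<lambda>x. (1 - V h) ^ dst n z x))"
    by (rule nn_integral_eq_integral)
       (use Vle in \<open>auto intro!: integrable_measure_pmf_finite simp: ea_init_def finite_set_pmf_Pi_bits\<close>)
  also have "\<dots> = ennreal (((2 - V h)/2)^n)"
    using Vle by (subst init_expect) auto
  finally show ?case by simp
next
  case (Suc t)
  have n0: "real n > 0" using n2 by simp
  define s where "s = h - Suc t"
  have hs: "h - t = Suc s" using Suc.prems by (simp add: s_def)
  have st0: "s \<le> t0" using ht by (simp add: s_def)
  define \<epsilon> where "\<epsilon> = exp (- (V t0 * \<zeta> * n / 2))"
  have Vs: "V (Suc s) = V s * exp (-c/n)"
  proof -
    have e: "- (c * (real (Suc s) + n) / n) = - (c * (real s + n) / n) + (-c/n)"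
      using n0 by (simp add: field_simps)
    have "V (Suc s) = exp (- (c * (real s + n) / n) + (-c/n))" by (simp only: V_def e)
    also have "\<dots> = V s * exp (-c/n)" unfolding V_def by (rule exp_add)
    finally show ?thesis .
  qed
  have Vpos: "0 < V s" by (simp add: V_def)
  have Vc: "V s \<le> exp (-c)"
  proof -
    have "c \<le> c * (real s + n) / n" using c n0 by (simp add: field_simps)
    thus ?thesis by (simp add: V_def)
  qed
  have Vm: "0 \<le> V t0" "V t0 \<le> V s"
  proof -
    show "0 \<le> V t0" by (simp add: V_def)
    have "c * (real s + n) / n \<le> c * (real t0 + n) / n"
      using c n0 st0 by (intro divide_right_mono mult_left_mono) auto
    thus "V t0 \<le> V s" by (simp add: V_def)
  qed
  have inner: "(\<integral>\<^sup>+y. ennreal ((1 - V s) ^ dst n z y) \<partial>measure_pmf (ea_step n f (last xs)))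
        \<le> ennreal ((1 - V (h - t)) ^ dst n z (last xs)) + ennreal \<epsilon>"
    if xs: "xs \<in> set_pmf (ea_traj n f t)" for xs
  proof -
    have lb: "last xs \<in> bitstrings n" using traj_support[OF xs] by auto
    have "exp (-c) \<le> 1" using c by simp
    hence V1: "V s \<le> 1" using Vc by linarith
    have "(\<integral>\<^sup>+y. ennreal ((1 - V s) ^ dst n z y) \<partial>measure_pmf (ea_step n f (last xs)))
        = ennreal (measure_pmf.expectation (ea_step n f (last xs)) (\<lambda>y. (1 - V s) ^ dst n z y))"
      by (rule nn_step[OF lb]) (use V1 in simp)
    also have "\<dots> \<le> ennreal ((1 - V s * exp (-c/n)) ^ dst n z (last xs) + \<epsilon>)"
      unfolding \<epsilon>_def by (intro ennreal_leI onestep[OF n2 c z X Vpos Vc Vm])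
    also have "\<dots> = ennreal ((1 - V (h - t)) ^ dst n z (last xs)) + ennreal \<epsilon>"
    proof -
      have "exp (-c/n) \<le> 1" using c n0 by simp
      hence "V s * exp (-c/n) \<le> 1 * 1" using V1 Vpos by (intro mult_mono) auto
      hence "0 \<le> 1 - V (h - t)" unfolding hs Vs by simp
      thus ?thesis unfolding hs Vs by (intro ennreal_plus) (auto simp: \<epsilon>_def)
    qed
    finally show ?thesis .
  qed
  have "(\<integral>\<^sup>+xs. ennreal ((1 - V (h - Suc t)) ^ dst n z (last xs)) \<partial>measure_pmf (ea_traj n f (Suc t)))
      = (\<integral>\<^sup>+xs. (\<integral>\<^sup>+y. ennreal ((1 - V s) ^ dst n z y) \<partial>measure_pmf (ea_step n f (last xs))) \<partial>measure_pmf (ea_traj n f t))"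
    by (simp add: nn_integral_map_pmf s_def)
  also have "\<dots> \<le> (\<integral>\<^sup>+xs. ennreal ((1 - V (h - t)) ^ dst n z (last xs)) + ennreal \<epsilon> \<partial>measure_pmf (ea_traj n f t))"
    by (intro nn_integral_mono_AE AE_pmfI inner)
  also have "\<dots> = (\<integral>\<^sup>+xs. ennreal ((1 - V (h - t)) ^ dst n z (last xs)) \<partial>measure_pmf (ea_traj n f t)) + ennreal \<epsilon>"
    by (subst nn_integral_add) (auto simp: measure_pmf.emeasure_space_1)
  also have "\<dots> \<le> ennreal (((2 - V h)/2)^n + real t * \<epsilon>) + ennreal \<epsilon>"
    using Suc.IH Suc.prems unfolding \<epsilon>_def by (intro add_right_mono) auto
  also have "\<dots> = ennreal (((2 - V h)/2)^n + real (Suc t) * \<epsilon>)"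
  proof -
    have Vh: "V h \<le> 1" using c n0 by (simp add: V_def)
    have "0 \<le> ((2 - V h)/2)^n + real t * \<epsilon>" using Vh by (simp add: \<epsilon>_def)
    thus ?thesis by (subst ennreal_plus[symmetric]) (auto simp: \<epsilon>_def algebra_simps)
  qed
  finally show ?case unfolding \<epsilon>_def .
qed

end

context uniq
begin

lemma prob_bound:
  fixes c \<zeta> :: real and h t0 :: nat
  assumes n2: "n \<ge> 2" and c: "1/3 \<le> c" "c \<le> 1" and z: "0 < \<zeta>"
    and X: "exp (4*\<zeta>) * (exp (\<zeta> - 1) + \<zeta>) \<le> c - 1/real n"
    and ht: "h \<le> t0"
  shows "measure_pmf.prob (ea_traj n f h) {xs. \<forall>x\<in>set xs. f x \<noteq> opt_value n f}
     \<ge> 1 - (exp (- (real n * exp (- (c * (real t0 + n) / n)) / 2))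
            + real t0 * exp (- (exp (- (c * (real t0 + n) / n)) * \<zeta> * n / 2)))"
proof -
  define V where "V = (\<lambda>s::nat. exp (- (c * (real s + n) / n)))"
  define \<epsilon> where "\<epsilon> = exp (- (V t0 * \<zeta> * n / 2))"
  define L where "L = {xs. last xs = z}"
  define S where "S = {xs. \<forall>x\<in>set xs. f x \<noteq> opt_value n f}"
  have n0: "real n > 0" using n2 by simp
  have TB: "(\<integral>\<^sup>+xs. ennreal ((1 - V (h-h)) ^ dst n z (last xs)) \<partial>measure_pmf (ea_traj n f h))
          \<le> ennreal (((2 - V h)/2)^n + real h * \<epsilon>)"
    unfolding V_def \<epsilon>_def by (rule traj_bound[OF n2 c z X ht]) simp
  have "emeasure (measure_pmf (ea_traj n f h)) L = (\<integral>\<^sup>+xs. indicator L xs \<partial>measure_pmf (ea_traj n f h))"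
    by (simp add: nn_integral_indicator)
  also have "\<dots> \<le> (\<integral>\<^sup>+xs. ennreal ((1 - V (h-h)) ^ dst n z (last xs)) \<partial>measure_pmf (ea_traj n f h))"
  proof (intro nn_integral_mono)
    fix xs
    show "indicator L xs \<le> ennreal ((1 - V (h-h)) ^ dst n z (last xs))"
    proof (cases "last xs = z")
      case True
      have "dst n z z = 0" by (simp add: dst_def)
      then show ?thesis using True by (simp add: L_def)
    next
      case False
      then show ?thesis by (simp add: L_def)
    qed
  qed
  also have "\<dots> \<le> ennreal (((2 - V h)/2)^n + real h * \<epsilon>)" by (rule TB)
  finally have mL0: "ennreal (measure_pmf.prob (ea_traj n f h) L) \<le> ennreal (((2 - V h)/2)^n + real h * \<epsilon>)"
    by (simp add: measure_pmf.emeasure_eq_measure)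
  have R0: "0 \<le> ((2 - V h)/2)^n + real h * \<epsilon>"
  proof -
    have "V h \<le> 1" using c n0 by (simp add: V_def)
    thus ?thesis by (simp add: \<epsilon>_def)
  qed
  have mL: "measure_pmf.prob (ea_traj n f h) L \<le> ((2 - V h)/2)^n + real h * \<epsilon>"
    using mL0 R0 by (simp add: ennreal_le_iff)
  have Vh: "V t0 \<le> V h" "0 \<le> V h" "V h \<le> 1"
  proof -
    have "c * (real h + n) / n \<le> c * (real t0 + n) / n"
      using c n0 ht by (intro divide_right_mono mult_left_mono) auto
    thus "V t0 \<le> V h" by (simp add: V_def)
    show "0 \<le> V h" by (simp add: V_def)
    show "V h \<le> 1" using c n0 by (simp add: V_def)
  qed
  have p1: "((2 - V h)/2)^n \<le> exp (- (real n * V t0 / 2))"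
  proof -
    have "((2 - V h)/2)^n \<le> (exp (- (V h / 2)))^n"
      using Vh exp_ge_add_one_self[of "- (V h / 2)"] by (intro power_mono) auto
    also have "\<dots> = exp (real n * (- (V h / 2)))" by (subst exp_of_nat_mult[symmetric]) simp
    also have "\<dots> \<le> exp (- (real n * V t0 / 2))" using Vh n0 by (simp add: mult_left_mono)
    finally show ?thesis .
  qed
  have p2: "real h * \<epsilon> \<le> real t0 * \<epsilon>" using ht by (intro mult_right_mono) (auto simp: \<epsilon>_def)
  have AE: "AE xs in measure_pmf (ea_traj n f h). xs \<in> UNIV - L \<longrightarrow> xs \<in> S"
  proof (rule AE_pmfI, rule impI)
    fix xs assume xs: "xs \<in> set_pmf (ea_traj n f h)" and nL: "xs \<in> UNIV - L"
    have sup: "set xs \<subseteq> bitstrings n" "z \<in> set xs \<longrightarrow> last xs = z" using traj_support[OF xs] by auto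
    show "xs \<in> S" unfolding S_def opt
    proof safe
      fix x assume x: "x \<in> set xs" and fx: "f x = f z"
      have "x = z" using le_z[of x] sup x fx by auto
      thus False using sup x nL by (auto simp: L_def)
    qed
  qed
  have "1 - measure_pmf.prob (ea_traj n f h) L = measure_pmf.prob (ea_traj n f h) (UNIV - L)"
    using measure_pmf.prob_compl[of L "ea_traj n f h"] by simp
  also have "\<dots> \<le> measure_pmf.prob (ea_traj n f h) S"
    by (rule measure_pmf.finite_measure_mono_AE) (use AE in \<open>auto simp: AE_iff_measurable\<close>)
  finally show ?thesis using mL p1 p2 unfolding S_def V_def \<epsilon>_def by linarith
qed

end

lemma time_bound:
  assumes "\<And>h. h < t0 \<Longrightarrow> measure_pmf.prob (ea_traj n f h) {xs. \<forall>x\<in>set xs. f x \<noteq> opt_value n f} \<ge> 1 - Bd"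
  shows "expected_opt_time n f \<ge> ennreal (real t0 * (1 - Bd))"
proof -
  define P where "P t = measure_pmf.prob (ea_traj n f t) {xs. \<forall>x\<in>set xs. f x \<noteq> opt_value n f}" for t
  have "ennreal (real t0 * (1 - Bd)) \<le> (\<Sum>t<t0. ennreal (P t))"
  proof (cases "1 - Bd \<ge> 0")
    case True
    have "ennreal (real t0 * (1 - Bd)) = (\<Sum>t<t0. ennreal (1 - Bd))"
      using True by (simp add: ennreal_mult ennreal_of_nat_eq_real_of_nat)
    also have "\<dots> \<le> (\<Sum>t<t0. ennreal (P t))"
      by (intro sum_mono ennreal_leI) (use assms in \<open>auto simp: P_def\<close>)
    finally show ?thesis .
  next
    case False
    hence "real t0 * (1 - Bd) \<le> 0" by (simp add: mult_nonneg_nonpos)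
    hence "ennreal (real t0 * (1 - Bd)) = 0" by (simp add: ennreal_eq_0_iff)
    thus ?thesis by simp
  qed
  also have "\<dots> \<le> (\<Sum>t. ennreal (P t))"
    by (rule sum_le_suminf) auto
  finally show ?thesis unfolding expected_opt_time_def P_def .
qed

lemma asym:
  fixes a b k :: real assumes a: "0 < a" and b: "0 < b" and k: "0 < k"
  shows "((\<lambda>x::real. exp (- (a * x powr k)) + (3 * x * ln x + 1) * exp (- (b * x powr k))) \<longlongrightarrow> 0) at_top"
proof -
  have 1: "((\<lambda>x::real. exp (- a * x powr k)) \<longlongrightarrow> 0) at_top" using a k by real_asymp
  have 2: "((\<lambda>x::real. (3 * x * ln x + 1) * exp (- b * x powr k)) \<longlongrightarrow> 0) at_top" using b k by real_asymp
  show ?thesis using tendsto_add[OF 1 2] by simp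
qed

lemma exp_le_inv: fixes x :: real assumes "0 \<le> x" "x < 1" shows "exp x \<le> 1 / (1 - x)"
proof -
  have "1 + -x \<le> exp (-x)" by (rule exp_ge_add_one_self)
  hence "exp x * (1 - x) \<le> exp x * exp (-x)" by (intro mult_left_mono) auto
  also have "exp x * exp (-x) = 1" by (simp flip: exp_add)
  finally show ?thesis using assms by (simp add: pos_le_divide_eq)
qed

lemma e_bounds: "2 \<le> exp (1::real)" "exp (1::real) \<le> 3"
proof -
  show "2 \<le> exp (1::real)" using exp_ge_add_one_self[of "1::real"] by simp
  show "exp (1::real) \<le> 3" using e_less_272 by simp
qed

lemma X_bound:
  fixes \<eta> :: real assumes "0 < \<eta>" "\<eta> \<le> 1"
  shows "exp (4*(\<eta>/40)) * (exp (\<eta>/40 - 1) + \<eta>/40) \<le> (1 + \<eta>/2) / exp 1"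
proof -
  define \<zeta> where "\<zeta> = \<eta>/40"
  have z: "0 < \<zeta>" "\<zeta> \<le> 1/40" using assms by (auto simp: \<zeta>_def)
  have eq: "exp (4*\<zeta>) * (exp (\<zeta> - 1) + \<zeta>) = exp (4*\<zeta>) * (exp \<zeta> + exp 1 * \<zeta>) / exp 1"
    by (simp add: exp_diff field_simps)
  have e1: "exp (4*\<zeta>) \<le> 1 / (1 - 4*\<zeta>)" using z by (intro exp_le_inv) auto
  have e2: "exp \<zeta> \<le> 1 + 2*\<zeta>"
  proof -
    have "exp \<zeta> \<le> 1 / (1 - \<zeta>)" using z by (intro exp_le_inv) auto
    also have "\<dots> \<le> 1 + 2*\<zeta>"
    proof -
      have "(1 + 2*\<zeta>) * (1 - \<zeta>) = 1 + \<zeta> * (1 - 2*\<zeta>)" by (simp add: algebra_simps)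
      moreover have "0 \<le> \<zeta> * (1 - 2*\<zeta>)" using z by simp
      ultimately have "1 \<le> (1 + 2*\<zeta>) * (1 - \<zeta>)" by linarith
      thus ?thesis using z by (simp add: divide_le_eq)
    qed
    finally show ?thesis .
  qed
  have e3: "exp 1 * \<zeta> \<le> 3 * \<zeta>" using e_bounds z by (intro mult_right_mono) auto
  have "exp (4*\<zeta>) * (exp \<zeta> + exp 1 * \<zeta>) \<le> (1 / (1 - 4*\<zeta>)) * (1 + 5*\<zeta>)"
  proof -
    have e4: "exp \<zeta> + exp 1 * \<zeta> \<le> 1 + 5*\<zeta>" using e2 e3 by linarith
    show ?thesis using e1 e4 z by (intro mult_mono) auto
  qed
  also have "\<dots> \<le> 1 + 20 * \<zeta>"
  proof -
    have "(1 + 20*\<zeta>) * (1 - 4*\<zeta>) = 1 + 5*\<zeta> + \<zeta> * (11 - 80*\<zeta>)" by (simp add: algebra_simps)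
    moreover have "0 \<le> \<zeta> * (11 - 80*\<zeta>)" using z by simp
    ultimately have "1 + 5*\<zeta> \<le> (1 + 20*\<zeta>) * (1 - 4*\<zeta>)" by linarith
    thus ?thesis using z by (simp add: divide_le_eq mult.commute)
  qed
  finally have "exp (4*\<zeta>) * (exp \<zeta> + exp 1 * \<zeta>) / exp 1 \<le> (1 + 20*\<zeta>) / exp 1"
    by (intro divide_right_mono) auto
  thus ?thesis unfolding eq[unfolded \<zeta>_def] \<zeta>_def by simp
qed

lemma B_le_F:
  fixes \<delta> \<zeta> c :: real and n :: nat
  assumes d: "0 < \<delta>" "\<delta> \<le> 1/4" and c: "c = (1 + \<delta>/2) / exp 1" and z: "0 < \<zeta>" and n2: "n \<ge> 2"
  shows "exp (- (real n * exp (- (c * (real (nat \<lceil>(1-\<delta>) * exp 1 * real n * ln (real n)\<rceil>) + n) / n)) / 2))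
            + real (nat \<lceil>(1-\<delta>) * exp 1 * real n * ln (real n)\<rceil>)
              * exp (- (exp (- (c * (real (nat \<lceil>(1-\<delta>) * exp 1 * real n * ln (real n)\<rceil>) + n) / n)) * \<zeta> * n / 2))
         \<le> exp (- ((exp (-2) / 2) * real n powr (\<delta>/2)))
            + (3 * real n * ln (real n) + 1) * exp (- ((\<zeta> * exp (-2) / 2) * real n powr (\<delta>/2)))"
proof -
  define L where "L = ln (real n)"
  define x0 where "x0 = (1-\<delta>) * exp 1 * real n * L"
  define t0 where "t0 = nat \<lceil>x0\<rceil>"
  define V where "V = exp (- (c * (real t0 + n) / n))"
  define P where "P = exp (-2) * real n powr (\<delta>/2)"
  have n0: "real n > 0" and n1: "real n \<ge> 1" using n2 by auto
  have L0: "L \<ge> 0" using n1 by (simp add: L_def)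
  have e: "2 \<le> exp (1::real)" "exp (1::real) \<le> 3" by (rule e_bounds)+
  have x00: "x0 \<ge> 0" using d L0 n0 by (simp add: x0_def)
  have t0le: "real t0 \<le> x0 + 1"
    using x00 of_int_ceiling_le_add_one[of x0] by (simp add: t0_def)
  have t0le3: "real t0 \<le> 3 * real n * L + 1"
  proof -
    have "(1-\<delta>) * exp 1 \<le> 1 * 3" using d e by (intro mult_mono) auto
    moreover have "x0 = ((1-\<delta>) * exp 1) * (real n * L)" by (simp add: x0_def mult.assoc)
    moreover have "0 \<le> real n * L" using n0 L0 by simp
    ultimately have "x0 \<le> 3 * (real n * L)" by (metis mult_1 mult_right_mono)
    thus ?thesis using t0le by simp
  qed
  have c0: "0 < c" "c \<le> 1"
  proof -
    show "0 < c" unfolding c using d by simp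
    have "1 + \<delta>/2 \<le> exp 1" using d e by linarith
    thus "c \<le> 1" unfolding c by (simp add: divide_le_eq)
  qed
  have key: "c * (real t0 + n) / n \<le> (1 - \<delta>/2) * L + 2"
  proof -
    have k1: "c * (real t0 + n) / n \<le> c * (x0 + 1 + n) / n"
      using t0le c0 n0 by (intro divide_right_mono mult_left_mono) auto
    have k2: "c * (x0 + 1 + n) / n = (c * exp 1) * (1 - \<delta>) * L + c / n + c"
      using n0 by (simp add: x0_def field_simps)
    have k3: "c * exp 1 = 1 + \<delta>/2" using c by simp
    have k4: "(1 + \<delta>/2) * (1 - \<delta>) * L \<le> (1 - \<delta>/2) * L"
    proof -
      have "(1 + \<delta>/2) * (1 - \<delta>) \<le> 1 - \<delta>/2" using d by (simp add: algebra_simps)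
      thus ?thesis using L0 by (intro mult_right_mono) auto
    qed
    have k5: "c / n \<le> c" using c0 n1 by (simp add: divide_le_eq mult_le_cancel_left1)
    show ?thesis using k1 k2 k3 k4 k5 c0 by simp
  qed
  have nV: "real n * V \<ge> P"
  proof -
    have nexp: "real n = exp L" using n0 by (simp add: L_def)
    have "real n * V = exp L * V" using nexp by simp
    also have "\<dots> = exp (L - c * (real t0 + n) / n)" unfolding V_def by (simp add: exp_diff exp_minus divide_inverse)
    finally have "real n * V = exp (L - c * (real t0 + n) / n)" .
    hence "real n * V = exp (L - c * (real t0 + n) / n)" .
    also have "\<dots> \<ge> exp (-2 + (\<delta>/2) * L)"
    proof -
      have "(1 - \<delta>/2) * L = L - (\<delta>/2) * L" by (simp add: algebra_simps)
      hence "-2 + (\<delta>/2) * L \<le> L - c * (real t0 + n) / n" using key by linarith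
      thus ?thesis by simp
    qed
    also have "exp (-2 + (\<delta>/2) * L) = P" unfolding P_def L_def using n0
      by (subst exp_add) (simp add: powr_def mult.commute)
    finally show ?thesis by simp
  qed
  have P0: "P \<ge> 0" by (simp add: P_def)
  have t1: "exp (- (real n * V / 2)) \<le> exp (- ((exp (-2) / 2) * real n powr (\<delta>/2)))"
    using nV by (simp add: P_def)
  have t2: "real t0 * exp (- (V * \<zeta> * n / 2)) \<le> (3 * real n * ln (real n) + 1) * exp (- ((\<zeta> * exp (-2) / 2) * real n powr (\<delta>/2)))"
  proof (intro mult_mono)
    show "real t0 \<le> 3 * real n * ln (real n) + 1" using t0le3 by (simp add: L_def)
    have "\<zeta> * P \<le> \<zeta> * (real n * V)" using nV z by (intro mult_left_mono) auto
    thus "exp (- (V * \<zeta> * n / 2)) \<le> exp (- ((\<zeta> * exp (-2) / 2) * real n powr (\<delta>/2)))"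
      by (simp add: P_def algebra_simps)
    show "0 \<le> 3 * real n * ln (real n) + 1" using L0 by (simp add: L_def)
  qed auto
  show ?thesis using t1 t2 unfolding t0_def x0_def V_def L_def by linarith
qed

lemma main_delta:
  fixes \<delta> :: real
  assumes d: "0 < \<delta>" "\<delta> \<le> 1/4"
  shows "eventually (\<lambda>n. \<forall>f::(nat \<Rightarrow> bool) \<Rightarrow> real.
           (\<exists>!z. z \<in> bitstrings n \<and> (\<forall>y\<in>bitstrings n. f z \<le> f y)) \<longrightarrow>
           expected_opt_time n f \<ge> ennreal ((1 - 2*\<delta>) * exp 1 * real n * ln (real n))) sequentially"
proof -
  define \<eta> where "\<eta> = \<delta>/2"
  define c where "c = (1 + \<delta>/2) / exp 1"
  define \<zeta> where "\<zeta> = \<eta>/40"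
  define g where "g = (\<eta>/2) / exp 1"
  have e: "2 \<le> exp (1::real)" "exp (1::real) \<le> 3" by (rule e_bounds)+
  have eta: "0 < \<eta>" "\<eta> \<le> 1" using d by (auto simp: \<eta>_def)
  have z: "0 < \<zeta>" using eta by (simp add: \<zeta>_def)
  have c13: "1/3 \<le> c"
  proof -
    have "3 \<le> 3 * (1 + \<delta>/2)" using d by simp
    hence "exp 1 \<le> 3 * (1 + \<delta>/2)" using e by linarith
    thus ?thesis unfolding c_def by (simp add: field_simps)
  qed
  have c1: "c \<le> 1"
  proof -
    have "1 + \<delta>/2 \<le> exp 1" using d e by linarith
    thus ?thesis unfolding c_def by (simp add: divide_le_eq)
  qed
  have Xb: "exp (4*\<zeta>) * (exp (\<zeta> - 1) + \<zeta>) \<le> c - g"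
  proof -
    have "exp (4*\<zeta>) * (exp (\<zeta> - 1) + \<zeta>) \<le> (1 + \<eta>/2) / exp 1"
      unfolding \<zeta>_def by (rule X_bound[OF eta])
    also have "\<dots> = c - g" unfolding c_def g_def \<eta>_def by (simp add: field_simps)
    finally show ?thesis .
  qed
  have g0: "g > 0" using eta by (simp add: g_def)
  define F where "F = (\<lambda>x::real. exp (- ((exp (-2) / 2) * x powr (\<delta>/2)))
            + (3 * x * ln x + 1) * exp (- ((\<zeta> * exp (-2) / 2) * x powr (\<delta>/2))))"
  have Flim: "(F \<longlongrightarrow> 0) at_top" unfolding F_def
    by (rule asym) (use z d in auto)
  have Fseq: "(\<lambda>n. F (real n)) \<longlonglongrightarrow> 0"
    by (rule filterlim_compose[OF Flim filterlim_real_sequentially])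
  have ev1: "eventually (\<lambda>n::nat. n \<ge> 2) sequentially" by (rule eventually_ge_at_top)
  have ev2: "eventually (\<lambda>n::nat. 1 / real n < g) sequentially"
    by (rule order_tendstoD(2)[OF lim_inverse_n' g0])
  have ev3: "eventually (\<lambda>n::nat. F (real n) < \<delta>) sequentially"
    by (rule order_tendstoD(2)[OF Fseq d(1)])
  show ?thesis
  proof (rule eventually_mono[OF eventually_conj[OF ev1 eventually_conj[OF ev2 ev3]]], intro allI impI)
    fix n :: nat and f :: "(nat \<Rightarrow> bool) \<Rightarrow> real"
    assume nn: "2 \<le> n \<and> 1 / real n < g \<and> F (real n) < \<delta>"
    assume ex: "\<exists>!z. z \<in> bitstrings n \<and> (\<forall>y\<in>bitstrings n. f z \<le> f y)"
    have n2: "n \<ge> 2" using nn by simp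
    obtain z where zP: "z \<in> bitstrings n \<and> (\<forall>y\<in>bitstrings n. f z \<le> f y)"
      and zU: "\<forall>y. y \<in> bitstrings n \<and> (\<forall>x\<in>bitstrings n. f y \<le> f x) \<longrightarrow> y = z"
      using ex unfolding Ex1_def by blast
    interpret U: uniq n f z
    proof
      show "z \<in> bitstrings n" using zP by blast
      show "\<And>y. y \<in> bitstrings n \<Longrightarrow> f z \<le> f y" using zP by blast
      show "\<And>y. y \<in> bitstrings n \<Longrightarrow> \<forall>x\<in>bitstrings n. f y \<le> f x \<Longrightarrow> y = z" using zU by blast
    qed
    have X: "exp (4*\<zeta>) * (exp (\<zeta> - 1) + \<zeta>) \<le> c - 1/real n" using Xb nn by linarith
    define x0 where "x0 = (1-\<delta>) * exp 1 * real n * ln (real n)"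
    define t0 where "t0 = nat \<lceil>x0\<rceil>"
    define Bd where "Bd = exp (- (real n * exp (- (c * (real t0 + n) / n)) / 2))
            + real t0 * exp (- (exp (- (c * (real t0 + n) / n)) * \<zeta> * n / 2))"
    have BF: "Bd \<le> F (real n)"
      unfolding Bd_def t0_def x0_def F_def
      by (rule B_le_F[OF d c_def z n2])
    have Bd: "Bd \<le> \<delta>" using BF nn by linarith
    have pb: "measure_pmf.prob (ea_traj n f h) {xs. \<forall>x\<in>set xs. f x \<noteq> opt_value n f} \<ge> 1 - Bd"
      if "h < t0" for h
      unfolding Bd_def by (rule U.prob_bound[OF n2 c13 c1 z X]) (use that in simp)
    have "expected_opt_time n f \<ge> ennreal (real t0 * (1 - Bd))"
      by (rule time_bound) (rule pb)
    moreover have "(1 - 2*\<delta>) * exp 1 * real n * ln (real n) \<le> real t0 * (1 - Bd)"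
    proof -
      have L0: "ln (real n) \<ge> 0" using n2 by simp
      have x00: "x0 \<ge> 0" using d L0 by (simp add: x0_def)
      have t0x: "x0 \<le> real t0" unfolding t0_def using x00 by linarith
      have "(1 - 2*\<delta>) * exp 1 * real n * ln (real n) \<le> (1-\<delta>) * x0"
      proof -
        have "(1 - 2*\<delta>) \<le> (1-\<delta>) * (1-\<delta>)" by (simp add: algebra_simps)
        hence "(1 - 2*\<delta>) * (exp 1 * real n * ln (real n)) \<le> ((1-\<delta>) * (1-\<delta>)) * (exp 1 * real n * ln (real n))"
          using L0 by (intro mult_right_mono) auto
        thus ?thesis by (simp add: x0_def algebra_simps)
      qed
      also have "\<dots> \<le> real t0 * (1 - Bd)"
      proof -
        have "(1-\<delta>) \<le> (1 - Bd)" using Bd by simp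
        thus ?thesis using t0x x00 d by (simp add: mult.commute mult_mono)
      qed
      finally show ?thesis .
    qed
    ultimately show "expected_opt_time n f \<ge> ennreal ((1 - 2*\<delta>) * exp 1 * real n * ln (real n))"
      by (meson ennreal_leI order_trans)
  qed
qed

theorem corollary7:
  shows "\<exists>\<epsilon>::nat \<Rightarrow> real. \<epsilon> \<longlonglongrightarrow> 0 \<and>
    (\<forall>n>0. \<forall>f::(nat \<Rightarrow> bool) \<Rightarrow> real.
       (\<exists>!z. z \<in> bitstrings n \<and> (\<forall>y\<in>bitstrings n. f z \<le> f y)) \<longrightarrow>
       expected_opt_time n f \<ge> ennreal ((1 - \<epsilon> n) * exp 1 * real n * ln (real n)))"
proof -
  define Pk where "Pk k n = (\<forall>f::(nat \<Rightarrow> bool) \<Rightarrow> real.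
       (\<exists>!z. z \<in> bitstrings n \<and> (\<forall>y\<in>bitstrings n. f z \<le> f y)) \<longrightarrow>
       expected_opt_time n f \<ge> ennreal ((1 - 1 / (real k + 2)) * exp 1 * real n * ln (real n)))" for k n :: nat
  have evP: "eventually (\<lambda>n. Pk k n) sequentially" for k
  proof -
    define \<delta> where "\<delta> = 1 / (2 * (real k + 2))"
    have d: "0 < \<delta>" "\<delta> \<le> 1/4" by (auto simp: \<delta>_def field_simps)
    have e2: "1 - 2*\<delta> = 1 - 1 / (real k + 2)" by (simp add: \<delta>_def field_simps)
    show ?thesis using main_delta[OF d] unfolding Pk_def e2 .
  qed
  define K where "K n = (GREATEST k. k \<le> n \<and> Pk k n)" for n
  define \<epsilon> where "\<epsilon> n = (if \<exists>k\<le>n. Pk k n then 1 / (real (K n) + 2) else 1)" for n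
  have KP: "K n \<le> n \<and> Pk (K n) n" if "\<exists>k\<le>n. Pk k n" for n
  proof -
    from that obtain k where "k \<le> n \<and> Pk k n" by blast
    thus ?thesis unfolding K_def by (rule GreatestI_nat[where b=n]) auto
  qed
  have Kge: "k \<le> K n" if "k \<le> n" "Pk k n" for k n
    unfolding K_def by (rule Greatest_le_nat[where b=n]) (use that in auto)
  have lim: "\<epsilon> \<longlonglongrightarrow> 0"
  proof (rule order_tendstoI)
    fix a :: real assume "a < 0"
    moreover have "\<epsilon> n > 0" for n by (simp add: \<epsilon>_def)
    ultimately show "eventually (\<lambda>n. a < \<epsilon> n) sequentially" by (auto intro: always_eventually less_trans)
  next
    fix r :: real assume r: "0 < r"
    obtain k where k: "inverse (real (Suc k)) < r" using reals_Archimedean[OF r] by blast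
    have kr: "1 / (real k + 2) < r"
    proof -
      have "1 / (real k + 2) \<le> inverse (real (Suc k))" by (simp add: field_simps)
      thus ?thesis using k by linarith
    qed
    have "eventually (\<lambda>n. Pk k n \<and> k \<le> n) sequentially"
      using evP[of k] eventually_ge_at_top[of k] by (rule eventually_conj)
    thus "eventually (\<lambda>n. \<epsilon> n < r) sequentially"
    proof (rule eventually_mono)
      fix n assume n: "Pk k n \<and> k \<le> n"
      hence ex: "\<exists>k\<le>n. Pk k n" by blast
      have "k \<le> K n" using Kge n by blast
      hence "1 / (real (K n) + 2) \<le> 1 / (real k + 2)" by (simp add: frac_le)
      thus "\<epsilon> n < r" using ex kr by (simp add: \<epsilon>_def)
    qed
  qed
  have main: "\<forall>n>0. \<forall>f::(nat \<Rightarrow> bool) \<Rightarrow> real.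
       (\<exists>!z. z \<in> bitstrings n \<and> (\<forall>y\<in>bitstrings n. f z \<le> f y)) \<longrightarrow>
       expected_opt_time n f \<ge> ennreal ((1 - \<epsilon> n) * exp 1 * real n * ln (real n))"
  proof (intro allI impI)
    fix n :: nat and f :: "(nat \<Rightarrow> bool) \<Rightarrow> real"
    assume ex: "\<exists>!z. z \<in> bitstrings n \<and> (\<forall>y\<in>bitstrings n. f z \<le> f y)"
    show "expected_opt_time n f \<ge> ennreal ((1 - \<epsilon> n) * exp 1 * real n * ln (real n))"
    proof (cases "\<exists>k\<le>n. Pk k n")
      case True
      have "Pk (K n) n" using KP[OF True] by blast
      thus ?thesis using ex True unfolding Pk_def \<epsilon>_def by simp
    next
      case False
      hence "\<epsilon> n = 1" by (simp add: \<epsilon>_def)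
      thus ?thesis by simp
    qed
  qed
  show ?thesis using lim main by blast
qed

end
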